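(* Let $\varrho\in C^2(\mathbb{C};\mathbb{C})$ be not $\mathbb{R}$-affine, $K\subseteq\mathbb{C}^2$ compact and $\varepsilon>0$. Then there exist $\mathbb{C}$-affine maps $\phi:\mathbb{C}^2\to\mathbb{C}^{12}$ and $\psi:\mathbb{C}^{12}\to\mathbb{C}$ such that at least one of the three inequalities $$\sup_{(z,w)\in K}|(\psi\circ\varrho^{\times12}\circ\phi)(z,w)-zw|<\varepsilon,\quad \sup_{(z,w)\in K}|(\psi\circ\varrho^{\times12}\circ\phi)(z,w)-z\overline{w}|<\varepsilon,\quad \sup_{(z,w)\in K}|(\psi\circ\varrho^{\times12}\circ\phi)(z,w)-\overline{zw}|<\varepsilon$$ holds.
   Context: $\varrho$ is $\mathbb{R}$-affine if it is affine as a map $\mathbb{R}^2\to\mathbb{R}^2$ under $\mathbb{C}\cong\mathbb{R}^2$. A map $\mathbb{C}^a\to\mathbb{C}^b$ is $\mathbb{C}$-affine if it has the form $z\mapsto Az+b$ with complex $A,b$. $\varrho^{\times12}$ applies $\varrho$ componentwise on $\mathbb{C}^{12}$. $C^2(\mathbb{C};\mathbb{C})$: continuous partial derivatives (real sense) up to order 2. *)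

theory Defs
  imports "HOL-Analysis.Analysis"
begin

text \<open>C^2 in the real sense: twice Frechet differentiable (complex viewed as R^2)
  with continuous second derivative.\<close>
definition C2_real :: "(complex \<Rightarrow> complex) \<Rightarrow> bool" where
  "C2_real f \<longleftrightarrow>
     (\<exists>f' :: complex \<Rightarrow> (complex \<Rightarrow>\<^sub>L complex).
      \<exists>f'' :: complex \<Rightarrow> (complex \<Rightarrow>\<^sub>L (complex \<Rightarrow>\<^sub>L complex)).
        (\<forall>x. (f has_derivative blinfun_apply (f' x)) (at x)) \<and>
        (\<forall>x. (f' has_derivative blinfun_apply (f'' x)) (at x)) \<and>
        continuous_on UNIV f'')"

text \<open>R-affine: affine as a map R^2 -> R^2 (linear means R-linear here).\<close>
definition R_affine :: "(complex \<Rightarrow> complex) \<Rightarrow> bool" where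
  "R_affine f \<longleftrightarrow> (\<exists>L b. linear L \<and> (\<forall>z. f z = L z + b))"

definition C_affine :: "(complex^'a \<Rightarrow> complex^'b) \<Rightarrow> bool" where
  "C_affine f \<longleftrightarrow> (\<exists>(A::complex^'a^'b) b. \<forall>x. f x = A *v x + b)"

definition C_affine_scalar :: "(complex^'a \<Rightarrow> complex) \<Rightarrow> bool" where
  "C_affine_scalar f \<longleftrightarrow> (\<exists>(d::complex^'a) e. \<forall>x. f x = (\<Sum>j\<in>UNIV. d$j * x$j) + e)"

definition rho_vec :: "(complex \<Rightarrow> complex) \<Rightarrow> complex^'n \<Rightarrow> complex^'n" where
  "rho_vec \<rho> u = (\<chi> j. \<rho> (u$j))"

end

theory Submission
  imports Defs
begin

lemma hess_nonzero:
  fixes \<rho> :: "complex \<Rightarrow> complex"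
  assumes d1: "\<And>x. (\<rho> has_derivative blinfun_apply (f' x)) (at x)"
    and d2: "\<And>x. (f' has_derivative blinfun_apply (f'' x)) (at x)"
    and na: "\<not> R_affine \<rho>"
  shows "\<exists>z0. f'' z0 \<noteq> 0"
proof (rule ccontr)
  assume "\<not> (\<exists>z0. f'' z0 \<noteq> 0)"
  then have z: "\<And>x. f'' x = 0" by auto
  have "\<exists>c. \<forall>x\<in>UNIV. f' x = c"
    by (rule has_derivative_zero_constant) (use d2 z in \<open>auto simp: zero_blinfun.rep_eq[abs_def] has_derivative_at_withinI\<close>)
  then obtain L where L: "\<And>x. f' x = L" by auto
  have "\<exists>c. \<forall>x\<in>UNIV. (\<lambda>x. \<rho> x - blinfun_apply L x) x = c"
  proof (rule has_derivative_zero_constant)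
    fix x
    have "((\<lambda>x. \<rho> x - blinfun_apply L x) has_derivative (\<lambda>h. blinfun_apply L h - blinfun_apply L h)) (at x)"
      using d1[of x] L by (auto intro!: derivative_eq_intros)
    then show "((\<lambda>x. \<rho> x - blinfun_apply L x) has_derivative (\<lambda>h. 0)) (at x within UNIV)" by simp
  qed auto
  then obtain b where "\<And>x. \<rho> x - blinfun_apply L x = b" by auto
  then have "\<And>x. \<rho> x = blinfun_apply L x + b" by (metis add.commute diff_add_cancel)
  moreover have "linear (blinfun_apply L)" by (simp add: blinfun.bounded_linear_right bounded_linear.linear)
  ultimately show False using na unfolding R_affine_def by blast
qed

lemma realize:
  fixes L :: "(complex \<times> (complex^2) \<times> complex) list" and e :: complex
  assumes "length L = 12"
  shows "\<exists>(\<phi>::complex^2\<Rightarrow>complex^12) (\<psi>::complex^12\<Rightarrow>complex). C_affine \<phi> \<and> C_affine_scalar \<psi> \<and>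
     (\<forall>x. (\<psi> \<circ> rho_vec \<rho> \<circ> \<phi>) x = sum_list (map (\<lambda>(d,r,c). d * \<rho> ((\<Sum>j\<in>UNIV. r$j * x$j) + c)) L) + e)"
proof -
  obtain g :: "nat \<Rightarrow> 12" where g: "bij_betw g {0..<card (UNIV::12 set)} UNIV"
    using ex_bij_betw_nat_finite[of "UNIV::12 set"] by auto
  then have g': "bij_betw g {0..<length L} UNIV" using assms by simp
  define h where "h = inv_into {0..<length L} g"
  have hg: "bij_betw h UNIV {0..<length L}" unfolding h_def by (rule bij_betw_inv_into[OF g'])
  define A :: "complex^2^12" where "A = (\<chi> i j. fst (snd (L ! h i)) $ j)"
  define bb :: "complex^12" where "bb = (\<chi> i. snd (snd (L ! h i)))"
  define dd :: "complex^12" where "dd = (\<chi> i. fst (L ! h i))"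
  define \<phi> :: "complex^2\<Rightarrow>complex^12" where "\<phi> x = A *v x + bb" for x
  define \<psi> :: "complex^12\<Rightarrow>complex" where "\<psi> y = (\<Sum>j\<in>UNIV. dd$j * y$j) + e" for y
  define F where "F n x = (case L ! n of (d,r,c) \<Rightarrow> d * \<rho> ((\<Sum>j\<in>UNIV. r$j * x$j) + c))" for n x
  have eq: "(\<psi> \<circ> rho_vec \<rho> \<circ> \<phi>) x = sum_list (map (\<lambda>(d,r,c). d * \<rho> ((\<Sum>j\<in>UNIV. r$j * x$j) + c)) L) + e" for x
  proof -
    have "(\<psi> \<circ> rho_vec \<rho> \<circ> \<phi>) x = (\<Sum>i\<in>UNIV. F (h i) x) + e"
      unfolding \<psi>_def \<phi>_def F_def rho_vec_def A_def bb_def dd_def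
      by (auto simp: matrix_vector_mult_def split: prod.splits intro!: sum.cong)
    also have "(\<Sum>i\<in>UNIV. F (h i) x) = (\<Sum>n\<in>{0..<length L}. F n x)"
      by (rule sum.reindex_bij_betw[OF hg])
    also have "(\<Sum>n\<in>{0..<length L}. F n x) = sum_list (map (\<lambda>(d,r,c). d * \<rho> ((\<Sum>j\<in>UNIV. r$j * x$j) + c)) L)"
      unfolding F_def sum_list_sum_nth by simp
    finally show ?thesis .
  qed
  show ?thesis
    unfolding C_affine_def C_affine_scalar_def
    by (intro exI[of _ \<phi>] exI[of _ \<psi>]) (use eq in \<open>auto simp: \<phi>_def \<psi>_def\<close>)
qed

lemma second_diff:
  fixes \<rho> :: "complex \<Rightarrow> complex"
  assumes d1: "\<And>x. (\<rho> has_derivative blinfun_apply (f' x)) (at x)"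
    and d2: "\<And>x. (f' has_derivative blinfun_apply (f'' x)) (at x)"
    and cont: "continuous_on UNIV f''"
    and eta: "\<eta> > 0"
  shows "\<exists>\<delta>>0. \<forall>h k. norm h + norm k < \<delta> \<longrightarrow>
     norm (\<rho> (z0 + h + k) - \<rho> (z0 + h) - \<rho> (z0 + k) + \<rho> z0 - blinfun_apply (blinfun_apply (f'' z0) k) h)
       \<le> \<eta> * norm h * norm k"
proof -
  define T where "T = f'' z0"
  have "continuous (at z0) f''" using cont by (simp add: continuous_on_eq_continuous_at)
  then obtain \<delta> where dpos: "\<delta> > 0" and dd: "\<And>y. dist y z0 < \<delta> \<Longrightarrow> dist (f'' y) (f'' z0) < \<eta>"
    using eta unfolding continuous_at_eps_delta by blast
  show ?thesis
  proof (intro exI[of _ \<delta>] conjI allI impI dpos)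
    fix h k :: complex
    assume hk: "norm h + norm k < \<delta>"
    have step1: "norm (f' (z0 + x + k) - f' (z0 + x) - blinfun_apply T k) \<le> \<eta> * norm k"
      if x: "x \<in> closed_segment 0 h" for x
    proof -
      define G where "G y = f' y - blinfun_apply T y" for y
      have nx: "norm x \<le> norm h" using x by (metis segment_bound(1) diff_zero norm_minus_commute)
      have "norm (G (z0 + x + k) - G (z0 + x)) \<le> \<eta> * norm ((z0 + x + k) - (z0 + x))"
      proof (rule differentiable_bound[where f'="\<lambda>y. blinfun_apply (f'' y - T)" and S="closed_segment (z0 + x) (z0 + x + k)"])
        show "convex (closed_segment (z0 + x) (z0 + x + k))" by simp
        fix y assume y: "y \<in> closed_segment (z0 + x) (z0 + x + k)"
        have "(G has_derivative (\<lambda>d. blinfun_apply (f'' y) d - blinfun_apply T d)) (at y)"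
          unfolding G_def using d2[of y] by (auto intro!: derivative_eq_intros)
        then show "(G has_derivative blinfun_apply (f'' y - T)) (at y within closed_segment (z0 + x) (z0 + x + k))"
          by (simp add: minus_blinfun.rep_eq[abs_def] has_derivative_at_withinI)
        have "norm (y - (z0 + x)) \<le> norm k"
          using y segment_bound(1)[of y "z0+x" "z0+x+k"] by simp
        then have "dist y z0 \<le> norm x + norm k"
        proof -
          have "y - z0 = (y - (z0 + x)) + x" by simp
          then have "norm (y - z0) \<le> norm (y - (z0 + x)) + norm x" by (metis norm_triangle_ineq)
          then show ?thesis using \<open>norm (y - (z0 + x)) \<le> norm k\<close> by (simp add: dist_norm)
        qed
        then have "dist y z0 < \<delta>" using nx hk by linarith
        then have "dist (f'' y) (f'' z0) < \<eta>" by (rule dd)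
        then show "onorm (blinfun_apply (f'' y - T)) \<le> \<eta>"
          by (simp add: T_def dist_norm norm_blinfun.rep_eq[symmetric])
      qed auto
      moreover have "G (z0 + x + k) - G (z0 + x) = f' (z0 + x + k) - f' (z0 + x) - blinfun_apply T k"
        unfolding G_def by (simp add: blinfun.add_right algebra_simps)
      ultimately show ?thesis by simp
    qed
    define F where "F x = \<rho> (z0 + x + k) - \<rho> (z0 + x) - blinfun_apply (blinfun_apply T k) x" for x
    have "norm (F h - F 0) \<le> (\<eta> * norm k) * norm (h - 0)"
    proof (rule differentiable_bound[where f'="\<lambda>x. blinfun_apply (f' (z0 + x + k) - f' (z0 + x) - blinfun_apply T k)" and S="closed_segment 0 h"])
      fix x assume x: "x \<in> closed_segment 0 h"
      have a: "((\<lambda>x. \<rho> (z0 + x + k)) has_derivative blinfun_apply (f' (z0 + x + k))) (at x)"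
      proof -
        have "((\<lambda>x. z0 + x + k) has_derivative (\<lambda>d. d)) (at x)" by (auto intro!: derivative_eq_intros)
        then show ?thesis using has_derivative_compose[of "\<lambda>x. z0 + x + k" "\<lambda>d. d" x UNIV \<rho> "blinfun_apply (f' (z0 + x + k))"] d1 by auto
      qed
      have b: "((\<lambda>x. \<rho> (z0 + x)) has_derivative blinfun_apply (f' (z0 + x))) (at x)"
      proof -
        have "((\<lambda>x. z0 + x) has_derivative (\<lambda>d. d)) (at x)" by (auto intro!: derivative_eq_intros)
        then show ?thesis using has_derivative_compose[of "\<lambda>x. z0 + x" "\<lambda>d. d" x UNIV \<rho> "blinfun_apply (f' (z0 + x))"] d1 by auto
      qed
      have "(F has_derivative (\<lambda>d. blinfun_apply (f' (z0 + x + k)) d - blinfun_apply (f' (z0 + x)) d - blinfun_apply (blinfun_apply T k) d)) (at x)"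
        unfolding F_def using a b by (auto intro!: derivative_eq_intros)
      then show "(F has_derivative blinfun_apply (f' (z0 + x + k) - f' (z0 + x) - blinfun_apply T k)) (at x within closed_segment 0 h)"
        by (simp add: minus_blinfun.rep_eq[abs_def] has_derivative_at_withinI)
      show "onorm (blinfun_apply (f' (z0 + x + k) - f' (z0 + x) - blinfun_apply T k)) \<le> \<eta> * norm k"
        using step1[OF x] by (simp add: norm_blinfun.rep_eq[symmetric])
    qed auto
    moreover have "F h - F 0 = \<rho> (z0 + h + k) - \<rho> (z0 + h) - \<rho> (z0 + k) + \<rho> z0 - blinfun_apply (blinfun_apply T k) h"
      unfolding F_def by (simp add: blinfun.zero_right)
    ultimately show "norm (\<rho> (z0 + h + k) - \<rho> (z0 + h) - \<rho> (z0 + k) + \<rho> z0 - blinfun_apply (blinfun_apply (f'' z0) k) h) \<le> \<eta> * norm h * norm k"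
      by (simp add: T_def mult_ac)
  qed
qed

definition Pf :: "complex \<Rightarrow> complex \<Rightarrow> complex \<Rightarrow> complex \<Rightarrow> complex \<Rightarrow> complex \<Rightarrow> complex" where
  "Pf a b c d u v = of_real (Re u * Re v) * a + of_real (Re u * Im v) * b + of_real (Im u * Re v) * c + of_real (Im u * Im v) * d"

lemma decomp:
  fixes T :: "complex \<Rightarrow>\<^sub>L complex \<Rightarrow>\<^sub>L complex"
  shows "blinfun_apply (blinfun_apply T u) v = Pf (T 1 1) (T 1 \<i>) (T \<i> 1) (T \<i> \<i>) u v"
proof -
  have eu: "u = Re u *\<^sub>R 1 + Im u *\<^sub>R \<i>" for u :: complex by (simp add: complex_eq_iff)
  have "blinfun_apply (blinfun_apply T u) v = blinfun_apply (blinfun_apply T (Re u *\<^sub>R 1 + Im u *\<^sub>R \<i>)) (Re v *\<^sub>R 1 + Im v *\<^sub>R \<i>)"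
    using eu[of u] eu[of v] by simp
  also have "\<dots> = Pf (T 1 1) (T 1 \<i>) (T \<i> 1) (T \<i> \<i>) u v"
    unfolding Pf_def by (simp only: blinfun.add_left blinfun.add_right blinfun.scaleR_left blinfun.scaleR_right) (simp add: scaleR_conv_of_real algebra_simps)
  finally show ?thesis .
qed

lemma idA: "Pf a b c d u v - \<i> * Pf a b c d u (\<i> * v) - \<i> * Pf a b c d (\<i> * u) v - Pf a b c d (\<i> * u) (\<i> * v)
   = (a - \<i> * b - \<i> * c - d) * (v * u)"
  unfolding Pf_def by (simp add: complex_eq_iff algebra_simps)

lemma idB1: "Pf a b c d u v + \<i> * Pf a b c d u (\<i> * v) - \<i> * Pf a b c d (\<i> * u) v + Pf a b c d (\<i> * u) (\<i> * v)
   = (a + \<i> * b - \<i> * c + d) * (u * cnj v)"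
  unfolding Pf_def by (simp add: complex_eq_iff algebra_simps)

lemma idB2: "Pf a b c d u v - \<i> * Pf a b c d u (\<i> * v) + \<i> * Pf a b c d (\<i> * u) v + Pf a b c d (\<i> * u) (\<i> * v)
   = (a - \<i> * b + \<i> * c + d) * (v * cnj u)"
  unfolding Pf_def by (simp add: complex_eq_iff algebra_simps)

lemma idC: "Pf a b c d u v + \<i> * Pf a b c d u (\<i> * v) + \<i> * Pf a b c d (\<i> * u) v - Pf a b c d (\<i> * u) (\<i> * v)
   = (a + \<i> * b + \<i> * c - d) * cnj (v * u)"
  unfolding Pf_def by (simp add: complex_eq_iff algebra_simps)

lemma allzero:
  assumes "a - \<i> * b - \<i> * c - d = 0" "a + \<i> * b - \<i> * c + d = 0" "a - \<i> * b + \<i> * c + d = 0" "a + \<i> * b + \<i> * c - d = 0"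
  shows "a = 0 \<and> b = 0 \<and> c = 0 \<and> (d::complex) = 0"
  using assms by (simp add: complex_eq_iff)

definition rv :: "2 \<Rightarrow> 2 \<Rightarrow> complex \<Rightarrow> complex \<Rightarrow> complex^2" where
  "rv q p a b = (\<chi> j. (if j = q then a else 0) + (if j = p then b else 0))"

lemma rv_sum[simp]: "(\<Sum>j\<in>UNIV. rv q p a b $ j * x $ j) = a * x$q + b * x$p"
proof -
  have "(\<Sum>j\<in>UNIV. rv q p a b $ j * x $ j) = (\<Sum>j\<in>UNIV. (if j = q then a * x$j else 0) + (if j = p then b * x$j else 0))"
    by (rule sum.cong) (auto simp: rv_def distrib_right)
  also have "\<dots> = a * x$q + b * x$p" by (simp add: sum.distrib)
  finally show ?thesis .
qed

lemma core:
  fixes \<rho> :: "complex \<Rightarrow> complex" and K :: "(complex^2) set" and p q :: 2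
    and M :: "complex \<Rightarrow> complex \<Rightarrow> complex" and lam cA cB cC cD :: complex
  assumes d1: "\<And>x. (\<rho> has_derivative blinfun_apply (f' x)) (at x)"
    and d2: "\<And>x. (f' has_derivative blinfun_apply (f'' x)) (at x)"
    and cont: "continuous_on UNIV f''"
    and K: "compact K" and eps: "\<epsilon> > 0" and lam: "lam \<noteq> 0"
    and iden: "\<And>u v. cA * blinfun_apply (blinfun_apply (f'' zc) u) v
        + cB * blinfun_apply (blinfun_apply (f'' zc) u) (\<i> * v)
        + cC * blinfun_apply (blinfun_apply (f'' zc) (\<i> * u)) v
        + cD * blinfun_apply (blinfun_apply (f'' zc) (\<i> * u)) (\<i> * v) = lam * M u v"
    and nc: "norm cA + norm cB + norm cC + norm cD \<le> 4"
  shows "\<exists>(\<phi> :: complex^2 \<Rightarrow> complex^12) (\<psi> :: complex^12 \<Rightarrow> complex).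
           C_affine \<phi> \<and> C_affine_scalar \<psi> \<and>
           (SUP x\<in>K. ereal (norm ((\<psi> \<circ> rho_vec \<rho> \<circ> \<phi>) x - M (x$p) (x$q)))) < ereal \<epsilon>"
proof -
  define P where "P u v = blinfun_apply (blinfun_apply (f'' zc) u) v" for u v
  obtain R where R: "R > 0" "\<And>x. x \<in> K \<Longrightarrow> norm x \<le> R"
    using compact_imp_bounded[OF K] by (auto simp: bounded_pos)
  define \<eta> where "\<eta> = \<epsilon> * norm lam / (8 * (R^2 + 1))"
  have eta: "\<eta> > 0" unfolding \<eta>_def using eps lam by (intro divide_pos_pos mult_pos_pos) (auto simp: add_pos_nonneg zero_le_power2 intro: add_nonneg_pos)
  obtain \<delta> where dpos: "\<delta> > 0" and dd: "\<And>h k. norm h + norm k < \<delta> \<Longrightarrow>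
     norm (\<rho> (zc + h + k) - \<rho> (zc + h) - \<rho> (zc + k) + \<rho> zc - P k h) \<le> \<eta> * norm h * norm k"
    using second_diff[OF d1 d2 cont eta, of zc] unfolding P_def by blast
  define s where "s = \<delta> / (4 * (R + 1))"
  have spos: "s > 0" unfolding s_def using dpos R by simp
  have s2R: "2 * s * R < \<delta>"
  proof -
    have "2 * s * R = \<delta> * (2 * R / (4 * (R + 1)))" unfolding s_def by (simp add: field_simps)
    also have "\<dots> < \<delta> * 1" using R dpos by (intro mult_strict_left_mono) (auto simp: field_simps)
    finally show ?thesis by simp
  qed
  define \<kappa> :: complex where "\<kappa> = 1 / (lam * of_real (s^2))"
  define D where "D h k = \<rho> (zc + h + k) - \<rho> (zc + h) - \<rho> (zc + k) + \<rho> zc" for h k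
  define L :: "(complex \<times> (complex^2) \<times> complex) list" where "L =
    [(\<kappa> * cA, rv q p (of_real s) (of_real s), zc), (- \<kappa> * cA, rv q p (of_real s) 0, zc), (- \<kappa> * cA, rv q p 0 (of_real s), zc),
     (\<kappa> * cB, rv q p (of_real s * \<i>) (of_real s), zc), (- \<kappa> * cB, rv q p (of_real s * \<i>) 0, zc), (- \<kappa> * cB, rv q p 0 (of_real s), zc),
     (\<kappa> * cC, rv q p (of_real s) (of_real s * \<i>), zc), (- \<kappa> * cC, rv q p (of_real s) 0, zc), (- \<kappa> * cC, rv q p 0 (of_real s * \<i>), zc),
     (\<kappa> * cD, rv q p (of_real s * \<i>) (of_real s * \<i>), zc), (- \<kappa> * cD, rv q p (of_real s * \<i>) 0, zc), (- \<kappa> * cD, rv q p 0 (of_real s * \<i>), zc)]"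
  define e where "e = \<kappa> * (cA + cB + cC + cD) * \<rho> zc"
  obtain \<phi> :: "complex^2 \<Rightarrow> complex^12" and \<psi> :: "complex^12 \<Rightarrow> complex" where
    phi: "C_affine \<phi>" and psi: "C_affine_scalar \<psi>" and
    comp: "\<And>x. (\<psi> \<circ> rho_vec \<rho> \<circ> \<phi>) x = sum_list (map (\<lambda>(d,r,c). d * \<rho> ((\<Sum>j\<in>UNIV. r$j * x$j) + c)) L) + e"
    using realize[where L=L and e=e and \<rho>=\<rho>] unfolding L_def by auto
  have bound: "norm ((\<psi> \<circ> rho_vec \<rho> \<circ> \<phi>) x - M (x$p) (x$q)) \<le> \<epsilon> / 2" if x: "x \<in> K" for x
  proof -
    define u where "u = x$p"
    define v where "v = x$q"
    have nu: "norm u \<le> R" unfolding u_def using R(2)[OF x] Finite_Cartesian_Product.norm_nth_le[where x=x and i=p] by linarith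
    have nv: "norm v \<le> R" unfolding v_def using R(2)[OF x] Finite_Cartesian_Product.norm_nth_le[where x=x and i=q] by linarith
    define S :: complex where "S = of_real s"
    have C: "(\<psi> \<circ> rho_vec \<rho> \<circ> \<phi>) x = \<kappa> * (cA * D (S * v) (S * u) + cB * D (S * \<i> * v) (S * u)
        + cC * D (S * v) (S * \<i> * u) + cD * D (S * \<i> * v) (S * \<i> * u))"
      unfolding comp L_def e_def
      apply (simp only: list.map prod.case sum_list_simps rv_sum)
      apply (simp add: D_def S_def u_def v_def algebra_simps)
      done
    have Pss: "P (S * a) (S * b) = of_real (s^2) * P a b" for a b
      unfolding P_def S_def by (simp add: scaleR_conv_of_real[symmetric] blinfun.scaleR_left blinfun.scaleR_right power2_eq_square)
    have sumP: "cA * P (S * u) (S * v) + cB * P (S * u) (S * \<i> * v) + cC * P (S * \<i> * u) (S * v) + cD * P (S * \<i> * u) (S * \<i> * v)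
       = of_real (s^2) * (lam * M u v)"
    proof -
      have "cA * P (S * u) (S * v) + cB * P (S * u) (S * \<i> * v) + cC * P (S * \<i> * u) (S * v) + cD * P (S * \<i> * u) (S * \<i> * v)
        = of_real (s^2) * (cA * P u v + cB * P u (\<i> * v) + cC * P (\<i> * u) v + cD * P (\<i> * u) (\<i> * v))"
        by (simp only: mult.assoc[of S \<i>] Pss) (simp add: algebra_simps)
      also have "\<dots> = of_real (s^2) * (lam * M u v)" using iden[of u v] unfolding P_def by simp
      finally show ?thesis .
    qed
    have ks: "\<kappa> * (of_real (s^2) * (lam * M u v)) = M u v"
      unfolding \<kappa>_def using lam spos by (simp add: field_simps)
    have E: "norm (D h k - P k h) \<le> \<eta> * (s * R) * (s * R)"
      if h: "norm h \<le> s * R" and k: "norm k \<le> s * R" for h k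
    proof -
      have "norm h + norm k < \<delta>" using h k s2R by linarith
      then have "norm (D h k - P k h) \<le> \<eta> * norm h * norm k" using dd unfolding D_def by blast
      also have "\<dots> \<le> \<eta> * (s * R) * (s * R)" using h k eta spos R by (intro mult_mono) auto
      finally show ?thesis .
    qed
    have nS: "norm (S * a) \<le> s * R" "norm (S * \<i> * a) \<le> s * R" if "norm a \<le> R" for a
      using that spos by (auto simp: S_def norm_mult intro: mult_left_mono)
    define B where "B = \<eta> * (s * R) * (s * R)"
    have e0: "norm (D (S * v) (S * u) - P (S * u) (S * v)) \<le> B"
      and e1: "norm (D (S * \<i> * v) (S * u) - P (S * u) (S * \<i> * v)) \<le> B"
      and e2: "norm (D (S * v) (S * \<i> * u) - P (S * \<i> * u) (S * v)) \<le> B"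
      and e3: "norm (D (S * \<i> * v) (S * \<i> * u) - P (S * \<i> * u) (S * \<i> * v)) \<le> B"
      unfolding B_def using E nS nu nv by blast+
    have "(\<psi> \<circ> rho_vec \<rho> \<circ> \<phi>) x - M u v = \<kappa> * (cA * (D (S * v) (S * u) - P (S * u) (S * v))
        + cB * (D (S * \<i> * v) (S * u) - P (S * u) (S * \<i> * v))
        + cC * (D (S * v) (S * \<i> * u) - P (S * \<i> * u) (S * v))
        + cD * (D (S * \<i> * v) (S * \<i> * u) - P (S * \<i> * u) (S * \<i> * v)))"
      unfolding C using sumP ks by (simp add: algebra_simps)
    also have "norm \<dots> \<le> norm \<kappa> * (norm cA * B + norm cB * B + norm cC * B + norm cD * B)"
      unfolding norm_mult
      by (intro mult_left_mono order_trans[OF norm_triangle_ineq] add_mono)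
         (auto simp: norm_mult intro!: mult_left_mono e0 e1 e2 e3)
    also have "\<dots> \<le> norm \<kappa> * (4 * B)"
    proof -
      have "B \<ge> 0" unfolding B_def using eta spos R by (intro mult_nonneg_nonneg) auto
      then have "norm cA * B + norm cB * B + norm cC * B + norm cD * B \<le> 4 * B"
        using mult_right_mono[OF nc \<open>B \<ge> 0\<close>] by (simp add: algebra_simps)
      then show ?thesis by (simp add: mult_left_mono)
    qed
    also have "\<dots> = \<epsilon> / 2 * (R^2 / (R^2 + 1))"
    proof -
      have rr: "0 < R * R" using R(1) by simp
      have p1: "8 + R * (R * 8) \<noteq> 0" "2 + R * (R * 2) \<noteq> 0"
        using rr by (simp_all add: mult.assoc[symmetric])
      show ?thesis
        unfolding \<kappa>_def B_def \<eta>_def using lam spos R p1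
        by (simp add: norm_divide norm_mult power2_eq_square field_simps)
    qed
    also have "\<dots> \<le> \<epsilon> / 2"
    proof -
      have "R^2 / (R^2 + 1) \<le> 1" by (subst divide_le_eq_1) (auto intro: add_nonneg_pos)
      then show ?thesis using eps by (intro mult_left_le) auto
    qed
    finally show ?thesis unfolding u_def v_def .
  qed
  have "(SUP x\<in>K. ereal (norm ((\<psi> \<circ> rho_vec \<rho> \<circ> \<phi>) x - M (x$p) (x$q)))) \<le> ereal (\<epsilon> / 2)"
    by (rule SUP_least) (use bound in auto)
  also have "\<dots> < ereal \<epsilon>" using eps by simp
  finally show ?thesis using phi psi by blast
qed

theorem proposition3p3:
  fixes \<rho> :: "complex \<Rightarrow> complex"
    and K :: "(complex^2) set"
    and \<epsilon> :: real
  assumes "C2_real \<rho>"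
    and "\<not> R_affine \<rho>"
    and "compact K"
    and "\<epsilon> > 0"
  shows "\<exists>(\<phi> :: complex^2 \<Rightarrow> complex^12) (\<psi> :: complex^12 \<Rightarrow> complex).
           C_affine \<phi> \<and> C_affine_scalar \<psi> \<and>
           ((SUP x\<in>K. ereal (norm ((\<psi> \<circ> rho_vec \<rho> \<circ> \<phi>) x - x$1 * x$2))) < ereal \<epsilon> \<or>
            (SUP x\<in>K. ereal (norm ((\<psi> \<circ> rho_vec \<rho> \<circ> \<phi>) x - x$1 * cnj (x$2)))) < ereal \<epsilon> \<or>
            (SUP x\<in>K. ereal (norm ((\<psi> \<circ> rho_vec \<rho> \<circ> \<phi>) x - cnj (x$1 * x$2)))) < ereal \<epsilon>)"
proof -
  obtain f' :: "complex \<Rightarrow> (complex \<Rightarrow>\<^sub>L complex)" and f'' :: "complex \<Rightarrow> (complex \<Rightarrow>\<^sub>L (complex \<Rightarrow>\<^sub>L complex))"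
    where d1: "\<And>x. (\<rho> has_derivative blinfun_apply (f' x)) (at x)"
      and d2: "\<And>x. (f' has_derivative blinfun_apply (f'' x)) (at x)"
      and cont: "continuous_on UNIV f''"
    using assms(1) unfolding C2_real_def by blast
  obtain z0 where nz: "f'' z0 \<noteq> 0" using hess_nonzero[OF d1 d2 assms(2)] by blast
  obtain a b c d where Pd: "\<And>u v. blinfun_apply (blinfun_apply (f'' z0) u) v = Pf a b c d u v"
    using decomp[of "f'' z0"] by blast
  have not_all: "\<not> (a - \<i> * b - \<i> * c - d = 0 \<and> a + \<i> * b - \<i> * c + d = 0 \<and> a - \<i> * b + \<i> * c + d = 0 \<and> a + \<i> * b + \<i> * c - d = 0)"
  proof
    assume "a - \<i> * b - \<i> * c - d = 0 \<and> a + \<i> * b - \<i> * c + d = 0 \<and> a - \<i> * b + \<i> * c + d = 0 \<and> a + \<i> * b + \<i> * c - d = 0"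
    then have "a = 0 \<and> b = 0 \<and> c = 0 \<and> d = 0" using allzero by blast
    then have "\<And>u v. blinfun_apply (blinfun_apply (f'' z0) u) v = 0" by (simp add: Pd Pf_def)
    then have "f'' z0 = 0" by (intro blinfun_eqI) (simp add: blinfun_eqI)
    with nz show False by simp
  qed
  note core' = core[OF d1 d2 cont assms(3) assms(4), where zc=z0]
  show ?thesis
  proof (cases "a - \<i> * b - \<i> * c - d = 0")
    case False
    have "\<exists>(\<phi> :: complex^2 \<Rightarrow> complex^12) (\<psi> :: complex^12 \<Rightarrow> complex). C_affine \<phi> \<and> C_affine_scalar \<psi> \<and>
           (SUP x\<in>K. ereal (norm ((\<psi> \<circ> rho_vec \<rho> \<circ> \<phi>) x - (\<lambda>u v. v * u) (x$2) (x$1)))) < ereal \<epsilon>"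
      by (rule core'[OF False, where cA=1 and cB="-\<i>" and cC="-\<i>" and cD="-1"])
         (use idA in \<open>simp_all add: Pd\<close>)
    then show ?thesis by auto
  next
    case A0: True
    show ?thesis
    proof (cases "a - \<i> * b + \<i> * c + d = 0")
      case False
      have "\<exists>(\<phi> :: complex^2 \<Rightarrow> complex^12) (\<psi> :: complex^12 \<Rightarrow> complex). C_affine \<phi> \<and> C_affine_scalar \<psi> \<and>
             (SUP x\<in>K. ereal (norm ((\<psi> \<circ> rho_vec \<rho> \<circ> \<phi>) x - (\<lambda>u v. v * cnj u) (x$2) (x$1)))) < ereal \<epsilon>"
        by (rule core'[OF False, where cA=1 and cB="-\<i>" and cC="\<i>" and cD="1"])
           (use idB2 in \<open>simp_all add: Pd\<close>)
      then show ?thesis by auto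
    next
      case B20: True
      show ?thesis
      proof (cases "a + \<i> * b - \<i> * c + d = 0")
        case False
        have "\<exists>(\<phi> :: complex^2 \<Rightarrow> complex^12) (\<psi> :: complex^12 \<Rightarrow> complex). C_affine \<phi> \<and> C_affine_scalar \<psi> \<and>
               (SUP x\<in>K. ereal (norm ((\<psi> \<circ> rho_vec \<rho> \<circ> \<phi>) x - (\<lambda>u v. u * cnj v) (x$1) (x$2)))) < ereal \<epsilon>"
          by (rule core'[OF False, where cA=1 and cB="\<i>" and cC="-\<i>" and cD="1"])
             (use idB1 in \<open>simp_all add: Pd\<close>)
        then show ?thesis by auto
      next
        case B10: True
        then have C: "a + \<i> * b + \<i> * c - d \<noteq> 0" using not_all A0 B20 by blast
        have "\<exists>(\<phi> :: complex^2 \<Rightarrow> complex^12) (\<psi> :: complex^12 \<Rightarrow> complex). C_affine \<phi> \<and> C_affine_scalar \<psi> \<and>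
               (SUP x\<in>K. ereal (norm ((\<psi> \<circ> rho_vec \<rho> \<circ> \<phi>) x - (\<lambda>u v. cnj (v * u)) (x$2) (x$1)))) < ereal \<epsilon>"
          by (rule core'[OF C, where cA=1 and cB="\<i>" and cC="\<i>" and cD="-1"])
             (use idC in \<open>simp_all add: Pd\<close>)
        then show ?thesis by auto
      qed
    qed
  qed
qed

end
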